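(* Let $F_1:\mathbb{H}\to\mathbb{C}$ be holomorphic and suppose that $G(a,x)=(F_1(a,x),x)$ defines a proper holomorphic map $G:\mathbb{H}\to\mathbb{H}$. Then there is a real constant $\theta$ such that $F_1(a,x)=e^{i\theta}a$ for all $(a,x)\in\mathbb{H}$.
   Context: For $x=(x_1,x_2,x_3)\in\mathbb{C}^3$ and $z,w\in\mathbb{C}$ write $D_x(z,w)=1-x_1z-x_2w+x_3zw$. The tetrablock is $\mathbb{E}=\{x\in\mathbb{C}^3: D_x(z,w)\neq0 \text{ for all } |z|\le1,|w|\le1\}$. The hexablock is \[ \mathbb{H}=\Big\{(a,x)\in\mathbb{C}\times\mathbb{E}:\ \sup_{z,w\in\mathbb{D}}\frac{|a|\sqrt{(1-|z|^2)(1-|w|^2)}}{|D_x(z,w)|}<1\Big\}\subset\mathbb{C}^4, \] with $\mathbb{D}$ the open unit disc; coordinates on $\mathbb{C}^4$ are written $(a,x)=(a,x_1,x_2,x_3)$. *)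

theory Defs
  imports "HOL-Analysis.Analysis"
begin

type_synonym c3 = "complex \<times> complex \<times> complex"
type_synonym c4 = "complex \<times> c3"

definition Dx :: "c3 \<Rightarrow> complex \<Rightarrow> complex \<Rightarrow> complex" where
  "Dx x z w = 1 - fst x * z - fst (snd x) * w + snd (snd x) * z * w"

definition tetrablock :: "c3 set" where
  "tetrablock = {x. \<forall>z w. cmod z \<le> 1 \<longrightarrow> cmod w \<le> 1 \<longrightarrow> Dx x z w \<noteq> 0}"

definition hexablock :: "c4 set" where
  "hexablock = {(a, x). x \<in> tetrablock \<and>
     (SUP zw \<in> ball (0::complex) 1 \<times> ball (0::complex) 1.
        cmod a * sqrt ((1 - (cmod (fst zw))\<^sup>2) * (1 - (cmod (snd zw))\<^sup>2))
          / cmod (Dx x (fst zw) (snd zw))) < 1}"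

definition cscale4 :: "complex \<Rightarrow> c4 \<Rightarrow> c4" where
  "cscale4 c p = (case p of (a, x1, x2, x3) \<Rightarrow> (c * a, c * x1, c * x2, c * x3))"

definition holomorphic4 :: "(c4 \<Rightarrow> complex) \<Rightarrow> c4 set \<Rightarrow> bool" where
  "holomorphic4 f S \<longleftrightarrow> (\<forall>p\<in>S. \<exists>L. (f has_derivative L) (at p) \<and>
      (\<forall>c v. L (cscale4 c v) = c * L v))"

definition proper_map :: "('a::topological_space \<Rightarrow> 'b::topological_space) \<Rightarrow> 'a set \<Rightarrow> 'b set \<Rightarrow> bool" where
  "proper_map G S T \<longleftrightarrow> G ` S \<subseteq> T \<and>
     (\<forall>K. K \<subseteq> T \<and> compact K \<longrightarrow> compact {p\<in>S. G p \<in> K})"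

end

theory Submission
  imports Defs "HOL-Complex_Analysis.Complex_Analysis"
begin

definition Qf :: "c3 \<Rightarrow> complex \<Rightarrow> complex \<Rightarrow> real" where
  "Qf x z w = sqrt ((1 - (cmod z)\<^sup>2) * (1 - (cmod w)\<^sup>2)) / cmod (Dx x z w)"

definition BB :: "(complex \<times> complex) set" where
  "BB = ball 0 1 \<times> ball 0 1"

definition Sfun :: "c3 \<Rightarrow> real" where
  "Sfun x = (SUP zw \<in> BB. Qf x (fst zw) (snd zw))"

definition Nd :: "c3 \<Rightarrow> c3 \<Rightarrow> real" where
  "Nd x y = cmod (fst x - fst y) + cmod (fst (snd x) - fst (snd y)) + cmod (snd (snd x) - snd (snd y))"

lemma Dx_diff:
  assumes "cmod z \<le> 1" "cmod w \<le> 1"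
  shows "cmod (Dx x z w - Dx y z w) \<le> Nd x y"
proof -
  have e: "Dx x z w - Dx y z w = - ((fst x - fst y) * z) - ((fst (snd x) - fst (snd y)) * w)
       + (snd (snd x) - snd (snd y)) * (z * w)"
    by (simp add: Dx_def algebra_simps)
  have zw: "cmod (z * w) \<le> 1" using assms by (simp add: norm_mult mult_le_one)
  have 1: "cmod ((fst x - fst y) * z) \<le> cmod (fst x - fst y)"
    using assms by (simp add: norm_mult mult_left_le)
  have 2: "cmod ((fst (snd x) - fst (snd y)) * w) \<le> cmod (fst (snd x) - fst (snd y))"
    using assms by (simp add: norm_mult mult_left_le)
  have 3: "cmod ((snd (snd x) - snd (snd y)) * (z * w)) \<le> cmod (snd (snd x) - snd (snd y))"
    using zw by (simp add: norm_mult mult_left_le)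
  have "cmod (Dx x z w - Dx y z w) \<le> cmod ((fst x - fst y) * z) + cmod ((fst (snd x) - fst (snd y)) * w)
       + cmod ((snd (snd x) - snd (snd y)) * (z * w))"
  proof -
    let ?A = "(fst x - fst y) * z" and ?B = "(fst (snd x) - fst (snd y)) * w"
      and ?C = "(snd (snd x) - snd (snd y)) * (z * w)"
    have t1: "cmod (- ?A - ?B + ?C) \<le> cmod (- ?A - ?B) + cmod ?C" by (rule norm_triangle_ineq)
    have t2: "cmod (- ?A - ?B) \<le> cmod (- ?A) + cmod ?B" by (rule norm_triangle_ineq4)
    have t3: "cmod (- ?A) = cmod ?A" by (rule norm_minus_cancel)
    show ?thesis unfolding e using t1 t2 t3 by linarith
  qed
  then show ?thesis using 1 2 3 unfolding Nd_def by linarith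
qed

lemma Nd_nonneg: "0 \<le> Nd x y" unfolding Nd_def by simp

lemma Nd_le: "Nd x y \<le> 3 * dist x y"
proof -
  have a: "cmod (fst x - fst y) \<le> dist x y"
    using dist_fst_le[of x y] by (simp add: dist_norm)
  have b: "cmod (fst (snd x) - fst (snd y)) \<le> dist x y"
    using dist_fst_le[of "snd x" "snd y"] dist_snd_le[of x y] by (simp add: dist_norm)
  have c: "cmod (snd (snd x) - snd (snd y)) \<le> dist x y"
    using dist_snd_le[of "snd x" "snd y"] dist_snd_le[of x y] by (simp add: dist_norm)
  show ?thesis using a b c unfolding Nd_def by linarith
qed

lemma E_min:
  assumes "x \<in> tetrablock"
  shows "\<exists>m>0. \<forall>z w. cmod z \<le> 1 \<longrightarrow> cmod w \<le> 1 \<longrightarrow> m \<le> cmod (Dx x z w)"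
proof -
  have "compact (cball (0::complex) 1 \<times> cball (0::complex) 1)"
    by (simp add: compact_Times)
  moreover have "cball (0::complex) 1 \<times> cball (0::complex) 1 \<noteq> {}" by auto
  moreover have "continuous_on (cball (0::complex) 1 \<times> cball (0::complex) 1)
      (\<lambda>zw. cmod (Dx x (fst zw) (snd zw)))"
    unfolding Dx_def by (intro continuous_intros)
  ultimately obtain p where p: "p \<in> cball 0 1 \<times> cball 0 1"
    and pm: "\<forall>q\<in>cball 0 1 \<times> cball 0 1. cmod (Dx x (fst p) (snd p)) \<le> cmod (Dx x (fst q) (snd q))"
    using continuous_attains_inf by blast
  have "Dx x (fst p) (snd p) \<noteq> 0"
    using assms p unfolding tetrablock_def by (auto simp: mem_Times_iff)
  then show ?thesis
  proof (intro exI[of _ "cmod (Dx x (fst p) (snd p))"] conjI allI impI)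
    show "0 < cmod (Dx x (fst p) (snd p))" using \<open>Dx x (fst p) (snd p) \<noteq> 0\<close> by simp
    fix z w :: complex assume "cmod z \<le> 1" "cmod w \<le> 1"
    then have "(z, w) \<in> cball 0 1 \<times> cball 0 1" by simp
    from pm[rule_format, OF this] show "cmod (Dx x (fst p) (snd p)) \<le> cmod (Dx x z w)" by simp
  qed
qed

lemma sqrt_bds:
  assumes "cmod z < 1" "cmod w < 1"
  shows "0 \<le> sqrt ((1 - (cmod z)\<^sup>2) * (1 - (cmod w)\<^sup>2))" "sqrt ((1 - (cmod z)\<^sup>2) * (1 - (cmod w)\<^sup>2)) \<le> 1"
proof -
  have a: "0 \<le> 1 - (cmod z)\<^sup>2" "1 - (cmod z)\<^sup>2 \<le> 1"
    using assms by (auto simp: power_le_one abs_square_le_1)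
  have b: "0 \<le> 1 - (cmod w)\<^sup>2" "1 - (cmod w)\<^sup>2 \<le> 1"
    using assms by (auto simp: power_le_one abs_square_le_1)
  show "0 \<le> sqrt ((1 - (cmod z)\<^sup>2) * (1 - (cmod w)\<^sup>2))" using a b by simp
  show "sqrt ((1 - (cmod z)\<^sup>2) * (1 - (cmod w)\<^sup>2)) \<le> 1"
    using a b by (simp add: mult_le_one)
qed

lemma Qf_bound:
  assumes "m > 0" "\<forall>z w. cmod z \<le> 1 \<longrightarrow> cmod w \<le> 1 \<longrightarrow> m \<le> cmod (Dx x z w)"
    "cmod z < 1" "cmod w < 1"
  shows "0 \<le> Qf x z w" "Qf x z w \<le> 1 / m"
proof -
  have d: "m \<le> cmod (Dx x z w)" using assms by auto
  note s = sqrt_bds[OF assms(3,4)]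
  show "0 \<le> Qf x z w" unfolding Qf_def using s by simp
  have "Qf x z w \<le> 1 / cmod (Dx x z w)" unfolding Qf_def using s d assms(1)
    by (simp add: divide_right_mono)
  also have "\<dots> \<le> 1 / m" using d assms(1) by (simp add: frac_le)
  finally show "Qf x z w \<le> 1 / m" .
qed

lemma BB_ne: "BB \<noteq> {}" unfolding BB_def by auto

lemma Sfun_bdd:
  assumes "x \<in> tetrablock"
  shows "bdd_above ((\<lambda>zw. Qf x (fst zw) (snd zw)) ` BB)"
proof -
  obtain m where m: "m > 0" "\<forall>z w. cmod z \<le> 1 \<longrightarrow> cmod w \<le> 1 \<longrightarrow> m \<le> cmod (Dx x z w)"
    using E_min[OF assms] by blast
  show ?thesis using Qf_bound[OF m] unfolding BB_def
    by (intro bdd_aboveI[of _ "1/m"]) (auto simp: mem_Times_iff)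
qed

lemma Sfun_upper:
  assumes "x \<in> tetrablock" "cmod z < 1" "cmod w < 1"
  shows "Qf x z w \<le> Sfun x"
  unfolding Sfun_def using cSUP_upper[OF _ Sfun_bdd[OF assms(1)], of "(z,w)"] assms
  by (simp add: BB_def)

lemma Sfun_least:
  assumes "\<And>z w. cmod z < 1 \<Longrightarrow> cmod w < 1 \<Longrightarrow> Qf x z w \<le> M"
  shows "Sfun x \<le> M"
  unfolding Sfun_def using assms by (intro cSUP_least[OF BB_ne]) (auto simp: BB_def mem_Times_iff)

lemma Dx_00 [simp]: "Dx x 0 0 = 1" by (simp add: Dx_def)

lemma Sfun_ge1:
  assumes "x \<in> tetrablock" shows "1 \<le> Sfun x"
  using Sfun_upper[OF assms, of 0 0] by (simp add: Qf_def)

lemma frac_est: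
  fixes s dx dy m N :: real
  assumes "0 \<le> s" "s \<le> 1" "m > 0" "dx \<ge> m" "dy \<ge> m/2" "\<bar>dx - dy\<bar> \<le> N"
  shows "\<bar>s/dy - s/dx\<bar> \<le> 2 * N / m\<^sup>2"
proof -
  have dxp: "dx > 0" "dy > 0" using assms by auto
  have "s/dy - s/dx = s * (dx - dy) / (dx * dy)" using dxp by (simp add: field_simps)
  then have "\<bar>s/dy - s/dx\<bar> = s * \<bar>dx - dy\<bar> / (dx * dy)" using dxp assms(1) by (simp add: abs_mult)
  also have "\<dots> \<le> N / (dx * dy)" using dxp assms
    by (intro divide_right_mono) (auto intro: mult_le_one order_trans[OF mult_right_mono[of s 1]])
  also have "\<dots> \<le> N / (m * (m/2))"
  proof (rule divide_left_mono)
    show "0 \<le> N" using assms(6) by linarith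
    show "m * (m / 2) \<le> dx * dy" using assms by (intro mult_mono) auto
    show "0 < dx * dy * (m * (m / 2))" using dxp assms by auto
  qed
  also have "\<dots> = 2 * N / m\<^sup>2" by (simp add: power2_eq_square field_simps)
  finally show ?thesis .
qed

lemma Sfun_cont_est:
  assumes "x \<in> tetrablock"
  shows "\<exists>m>0. \<forall>y. Nd x y \<le> m/2 \<longrightarrow> y \<in> tetrablock \<and> \<bar>Sfun y - Sfun x\<bar> \<le> 2 * Nd x y / m\<^sup>2"
proof -
  obtain m where m: "m > 0" "\<forall>z w. cmod z \<le> 1 \<longrightarrow> cmod w \<le> 1 \<longrightarrow> m \<le> cmod (Dx x z w)"
    using E_min[OF assms] by blast
  have "\<forall>y. Nd x y \<le> m/2 \<longrightarrow> y \<in> tetrablock \<and> \<bar>Sfun y - Sfun x\<bar> \<le> 2 * Nd x y / m\<^sup>2"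
  proof (intro allI impI)
    fix y assume N: "Nd x y \<le> m/2"
    have dy: "m/2 \<le> cmod (Dx y z w)" if "cmod z \<le> 1" "cmod w \<le> 1" for z w
    proof -
      have "cmod (Dx x z w) - cmod (Dx y z w) \<le> cmod (Dx x z w - Dx y z w)" by (rule norm_triangle_ineq2)
      then show ?thesis using Dx_diff[OF that, of x y] m that N by fastforce
    qed
    have yE: "y \<in> tetrablock" unfolding tetrablock_def
    proof (intro CollectI allI impI)
      fix z w :: complex assume "cmod z \<le> 1" "cmod w \<le> 1"
      then have "m/2 \<le> cmod (Dx y z w)" by (rule dy)
      then show "Dx y z w \<noteq> 0" using m(1) by auto
    qed
    have est: "\<bar>Qf y z w - Qf x z w\<bar> \<le> 2 * Nd x y / m\<^sup>2" if "cmod z < 1" "cmod w < 1" for z w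
    proof -
      have "\<bar>cmod (Dx x z w) - cmod (Dx y z w)\<bar> \<le> Nd x y"
        using Dx_diff[of z w x y] that norm_triangle_ineq3[of "Dx x z w" "Dx y z w"] by simp
      then show ?thesis unfolding Qf_def
        using frac_est[OF sqrt_bds[OF that] m(1)] m(2) dy that by simp
    qed
    have "Sfun y \<le> Sfun x + 2 * Nd x y / m\<^sup>2"
      by (rule Sfun_least) (use est Sfun_upper[OF assms] in fastforce)
    moreover have "Sfun x \<le> Sfun y + 2 * Nd x y / m\<^sup>2"
      by (rule Sfun_least) (use est Sfun_upper[OF yE] in fastforce)
    ultimately show "y \<in> tetrablock \<and> \<bar>Sfun y - Sfun x\<bar> \<le> 2 * Nd x y / m\<^sup>2"
      using yE by linarith
  qed
  then show ?thesis using m(1) by blast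
qed

lemma E_open: "open tetrablock"
  unfolding open_dist
proof (intro ballI)
  fix x assume x: "x \<in> tetrablock"
  obtain m where m: "m > 0" "\<forall>y. Nd x y \<le> m/2 \<longrightarrow> y \<in> tetrablock \<and> \<bar>Sfun y - Sfun x\<bar> \<le> 2 * Nd x y / m\<^sup>2"
    using Sfun_cont_est[OF x] by blast
  show "\<exists>e>0. \<forall>y. dist y x < e \<longrightarrow> y \<in> tetrablock"
  proof (intro exI[of _ "m/6"] conjI allI impI)
    fix y assume "dist y x < m/6"
    then have "Nd x y \<le> m/2" using Nd_le[of x y] by (simp add: dist_commute)
    then show "y \<in> tetrablock" using m by blast
  qed (use m(1) in simp)
qed

lemma Sfun_cont: "continuous_on tetrablock Sfun"
  unfolding continuous_on_iff
proof (intro ballI allI impI)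
  fix x e assume x: "x \<in> tetrablock" and e: "(0::real) < e"
  obtain m where m: "m > 0" "\<forall>y. Nd x y \<le> m/2 \<longrightarrow> y \<in> tetrablock \<and> \<bar>Sfun y - Sfun x\<bar> \<le> 2 * Nd x y / m\<^sup>2"
    using Sfun_cont_est[OF x] by blast
  show "\<exists>d>0. \<forall>x'\<in>tetrablock. dist x' x < d \<longrightarrow> dist (Sfun x') (Sfun x) < e"
  proof (intro exI[of _ "min (m/6) (e * m\<^sup>2 / 12)"] conjI ballI impI)
    fix y assume "dist y x < min (m/6) (e * m\<^sup>2 / 12)"
    then have d1: "dist x y < m/6" and d2: "dist x y < e * m\<^sup>2 / 12" by (auto simp: dist_commute)
    have N1: "Nd x y \<le> m/2" using Nd_le[of x y] d1 by linarith
    have N2: "Nd x y < e * m\<^sup>2 / 4" using Nd_le[of x y] d2 by linarith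
    have "\<bar>Sfun y - Sfun x\<bar> \<le> 2 * Nd x y / m\<^sup>2" using m N1 by blast
    also have "\<dots> < e" using N2 m(1) Nd_nonneg[of x y] by (simp add: field_simps)
    finally show "dist (Sfun y) (Sfun x) < e" by (simp add: dist_real_def)
  qed (use m(1) e in simp)
qed

lemma hexablock_iff:
  "(a, x) \<in> hexablock \<longleftrightarrow> x \<in> tetrablock \<and> cmod a * Sfun x < 1"
proof (cases "x \<in> tetrablock")
  case False then show ?thesis unfolding hexablock_def by simp
next
  case True
  have eq: "(SUP zw \<in> ball (0::complex) 1 \<times> ball (0::complex) 1.
        cmod a * sqrt ((1 - (cmod (fst zw))\<^sup>2) * (1 - (cmod (snd zw))\<^sup>2))
          / cmod (Dx x (fst zw) (snd zw))) = (SUP zw \<in> BB. cmod a * Qf x (fst zw) (snd zw))"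
    unfolding BB_def Qf_def by simp
  have bdd: "bdd_above ((\<lambda>zw. cmod a * Qf x (fst zw) (snd zw)) ` BB)"
  proof -
    obtain M where "\<forall>zw\<in>BB. Qf x (fst zw) (snd zw) \<le> M"
      using Sfun_bdd[OF True] by (auto simp: bdd_above_def)
    then show ?thesis by (intro bdd_aboveI[of _ "cmod a * M"]) (auto intro: mult_left_mono)
  qed
  have calc: "(SUP zw \<in> BB. cmod a * Qf x (fst zw) (snd zw)) = cmod a * Sfun x"
  proof (rule antisym)
    show "(SUP zw \<in> BB. cmod a * Qf x (fst zw) (snd zw)) \<le> cmod a * Sfun x"
      using Sfun_upper[OF True] by (intro cSUP_least[OF BB_ne]) (auto simp: BB_def intro: mult_left_mono)
  next
    show "cmod a * Sfun x \<le> (SUP zw \<in> BB. cmod a * Qf x (fst zw) (snd zw))"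
    proof (cases "a = 0")
      case True
      have "(0::real, 0::complex) \<in> BB \<or> True" by simp
      have "cmod a * Qf x 0 0 \<le> (SUP zw \<in> BB. cmod a * Qf x (fst zw) (snd zw))"
        using cSUP_upper[OF _ bdd, of "(0,0)"] by (simp add: BB_def)
      then show ?thesis using True by simp
    next
      case False
      have "Sfun x \<le> (SUP zw \<in> BB. cmod a * Qf x (fst zw) (snd zw)) / cmod a"
      proof (rule Sfun_least)
        fix z w :: complex assume "cmod z < 1" "cmod w < 1"
        then have "cmod a * Qf x z w \<le> (SUP zw \<in> BB. cmod a * Qf x (fst zw) (snd zw))"
          using cSUP_upper[OF _ bdd, of "(z,w)"] by (simp add: BB_def)
        then show "Qf x z w \<le> (SUP zw \<in> BB. cmod a * Qf x (fst zw) (snd zw)) / cmod a"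
          using False by (simp add: field_simps)
      qed
      then show ?thesis using False by (simp add: field_simps)
    qed
  qed
  have iff: "(a, x) \<in> hexablock \<longleftrightarrow> x \<in> tetrablock \<and> (SUP zw \<in> ball (0::complex) 1 \<times> ball (0::complex) 1.
        cmod a * sqrt ((1 - (cmod (fst zw))\<^sup>2) * (1 - (cmod (snd zw))\<^sup>2))
          / cmod (Dx x (fst zw) (snd zw))) < 1"
    unfolding hexablock_def by (simp only: mem_Collect_eq prod.case)
  have E2: "(SUP zw \<in> ball (0::complex) 1 \<times> ball (0::complex) 1.
        cmod a * sqrt ((1 - (cmod (fst zw))\<^sup>2) * (1 - (cmod (snd zw))\<^sup>2))
          / cmod (Dx x (fst zw) (snd zw))) = cmod a * Sfun x"
    by (rule trans[OF eq calc])
  show ?thesis using iff E2 by argo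
qed

definition sc :: "complex \<Rightarrow> c3 \<Rightarrow> c3" where
  "sc t x = (t * fst x, t * fst (snd x), t\<^sup>2 * snd (snd x))"

lemma Dx_sc: "Dx (sc t x) z w = Dx x (t*z) (t*w)"
  unfolding Dx_def sc_def by (simp add: power2_eq_square algebra_simps)

lemma sc_sc: "sc s (sc t x) = sc (s*t) x"
  unfolding sc_def by (simp add: power_mult_distrib algebra_simps)

lemma sc_1: "sc 1 x = x" by (simp add: sc_def)
lemma sc_0: "sc 0 x = (0,0,0)" by (simp add: sc_def)

lemma norm_mult_le1: "cmod t \<le> 1 \<Longrightarrow> cmod z \<le> 1 \<Longrightarrow> cmod (t*z) \<le> 1"
  by (simp add: norm_mult mult_le_one)

lemma norm_mult_lt1: "cmod t \<le> 1 \<Longrightarrow> cmod z < 1 \<Longrightarrow> cmod (t*z) < 1"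
proof -
  assume a: "cmod t \<le> 1" "cmod z < 1"
  have "cmod t * cmod z \<le> 1 * cmod z" by (rule mult_right_mono) (use a in auto)
  then show ?thesis using a by (simp add: norm_mult)
qed

lemma sc_E: assumes "x \<in> tetrablock" "cmod t \<le> 1" shows "sc t x \<in> tetrablock"
  unfolding tetrablock_def
proof (intro CollectI allI impI)
  fix z w :: complex assume "cmod z \<le> 1" "cmod w \<le> 1"
  then have "cmod (t*z) \<le> 1" "cmod (t*w) \<le> 1" using norm_mult_le1 assms(2) by auto
  then have "Dx x (t*z) (t*w) \<noteq> 0" using assms(1) unfolding tetrablock_def by blast
  then show "Dx (sc t x) z w \<noteq> 0" by (simp add: Dx_sc)
qed

lemma sc_S: assumes "x \<in> tetrablock" "cmod t \<le> 1" shows "Sfun (sc t x) \<le> Sfun x"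
proof (rule Sfun_least)
  fix z w :: complex assume zw: "cmod z < 1" "cmod w < 1"
  have tz: "cmod (t*z) < 1" "cmod (t*w) < 1" using norm_mult_lt1 assms(2) zw by auto
  have q1: "(cmod (t*z))\<^sup>2 \<le> (cmod z)\<^sup>2"
    using assms(2) by (simp add: norm_mult power_mult_distrib mult_left_le_one_le power_le_one)
  have q2: "(cmod (t*w))\<^sup>2 \<le> (cmod w)\<^sup>2"
    using assms(2) by (simp add: norm_mult power_mult_distrib mult_left_le_one_le power_le_one)
  have n1: "0 \<le> 1 - (cmod z)\<^sup>2" "0 \<le> 1 - (cmod w)\<^sup>2"
    using zw by (auto simp: abs_square_le_1)
  have h: "(1 - (cmod z)\<^sup>2) * (1 - (cmod w)\<^sup>2) \<le> (1 - (cmod (t*z))\<^sup>2) * (1 - (cmod (t*w))\<^sup>2)"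
  proof (rule mult_mono)
    show "0 \<le> 1 - (cmod (t*z))\<^sup>2" using tz by (auto simp: abs_square_le_1)
  qed (use q1 q2 n1 in auto)
  have "Dx x (t*z) (t*w) \<noteq> 0" using assms(1) tz unfolding tetrablock_def by auto
  then have pos: "0 < cmod (Dx x (t*z) (t*w))" by simp
  have "Qf (sc t x) z w = sqrt ((1 - (cmod z)\<^sup>2) * (1 - (cmod w)\<^sup>2)) / cmod (Dx x (t*z) (t*w))"
    by (simp add: Qf_def Dx_sc)
  also have "\<dots> \<le> sqrt ((1 - (cmod (t*z))\<^sup>2) * (1 - (cmod (t*w))\<^sup>2)) / cmod (Dx x (t*z) (t*w))"
    by (rule divide_right_mono) (use h pos in auto)
  also have "\<dots> = Qf x (t*z) (t*w)" by (simp add: Qf_def)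
  also have "\<dots> \<le> Sfun x" by (rule Sfun_upper[OF assms(1) tz])
  finally show "Qf (sc t x) z w \<le> Sfun x" .
qed

lemma E0: "(0,0,0) \<in> tetrablock" unfolding tetrablock_def Dx_def by simp

lemma S0: "Sfun (0,0,0) = 1"
proof (rule antisym)
  show "Sfun (0,0,0) \<le> 1"
  proof (rule Sfun_least)
    fix z w :: complex assume "cmod z < 1" "cmod w < 1"
    then show "Qf (0,0,0) z w \<le> 1" using sqrt_bds[of z w] by (simp add: Qf_def Dx_def)
  qed
  show "1 \<le> Sfun (0,0,0)" by (rule Sfun_ge1[OF E0])
qed

lemma E_x1: assumes "x \<in> tetrablock" shows "cmod (fst x) < 1"
proof (rule ccontr)
  assume "\<not> cmod (fst x) < 1"
  then have ge: "1 \<le> cmod (fst x)" by simp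
  then have nz: "fst x \<noteq> 0" by auto
  have "cmod (1 / fst x) \<le> 1" using ge by (simp add: norm_divide divide_le_eq_1)
  then have "Dx x (1 / fst x) 0 \<noteq> 0" using assms unfolding tetrablock_def by auto
  then show False using nz by (simp add: Dx_def)
qed

lemma S_gt1: assumes "x \<in> tetrablock" "fst x \<noteq> 0" shows "1 < Sfun x"
proof -
  define q where "q = (cmod (fst x))\<^sup>2"
  have q: "0 < q" "q < 1" using E_x1[OF assms(1)] assms(2) unfolding q_def
    by (auto simp: power_less_one_iff abs_square_less_1)
  have z: "cmod (cnj (fst x)) < 1" using E_x1[OF assms(1)] by simp
  have D: "Dx x (cnj (fst x)) 0 = of_real (1 - q)"
    unfolding Dx_def q_def using complex_norm_square[of "fst x"] by simp
  have Dn: "cmod (Dx x (cnj (fst x)) 0) = 1 - q" unfolding D norm_of_real using q by simp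
  have "Qf x (cnj (fst x)) 0 = sqrt (1 - q) / (1 - q)"
    unfolding Qf_def Dn by (simp add: q_def)
  also have "\<dots> > 1"
  proof -
    have "sqrt (1 - q) > 1 - q"
    proof -
      have "(1 - q) * (1 - q) < (1 - q) * 1" using q by (intro mult_strict_left_mono) auto
      then have "(1 - q)\<^sup>2 < 1 - q" by (simp add: power2_eq_square)
      then have "sqrt ((1 - q)\<^sup>2) < sqrt (1 - q)" by (rule real_sqrt_less_mono)
      moreover have "sqrt ((1 - q)\<^sup>2) = 1 - q" using q by simp
      ultimately show ?thesis by simp
    qed
    then show ?thesis using q by simp
  qed
  finally show ?thesis using Sfun_upper[OF assms(1) z, of 0] by simp
qed

lemma H_char: "hexablock = {p. snd p \<in> tetrablock \<and> cmod (fst p) * Sfun (snd p) < 1}"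
proof (rule set_eqI)
  fix p :: c4
  obtain a x where p: "p = (a, x)" by (cases p)
  show "p \<in> hexablock \<longleftrightarrow> p \<in> {p. snd p \<in> tetrablock \<and> cmod (fst p) * Sfun (snd p) < 1}"
    unfolding p by (simp add: hexablock_iff)
qed

lemma H_open: "open hexablock"
proof -
  have eqs: "{p. snd p \<in> tetrablock \<and> cmod (fst p) * Sfun (snd p) < 1}
      = (UNIV \<times> tetrablock) \<inter> (\<lambda>p. cmod (fst p) * Sfun (snd p)) -` {..<1}"
    by auto
  have cont: "continuous_on (UNIV \<times> tetrablock) (\<lambda>p::c4. cmod (fst p) * Sfun (snd p))"
  proof (intro continuous_on_mult)
    show "continuous_on (UNIV \<times> tetrablock) (\<lambda>p::c4. cmod (fst p))" by (intro continuous_intros)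
    show "continuous_on (UNIV \<times> tetrablock) (\<lambda>p::c4. Sfun (snd p))"
      by (rule continuous_on_compose2[OF Sfun_cont continuous_on_snd[OF continuous_on_id]]) auto
  qed
  have "open ((UNIV \<times> tetrablock) \<inter> (\<lambda>p. cmod (fst p) * Sfun (snd p)) -` {..<1})"
    by (rule continuous_open_preimage[OF cont open_Times[OF open_UNIV E_open] open_lessThan])
  then show ?thesis unfolding H_char eqs .
qed

lemma H_E: "(a, x) \<in> hexablock \<Longrightarrow> x \<in> tetrablock" by (simp add: hexablock_iff)

lemma H_a: assumes "(a, x) \<in> hexablock" shows "cmod a < 1"
proof -
  have "x \<in> tetrablock" "cmod a * Sfun x < 1" using assms by (auto simp: hexablock_iff)
  moreover have "cmod a * 1 \<le> cmod a * Sfun x" using Sfun_ge1[OF \<open>x \<in> tetrablock\<close>]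
    by (intro mult_left_mono) auto
  ultimately show ?thesis by simp
qed

lemma H_b: assumes "(a, x) \<in> hexablock" "cmod b \<le> cmod a" shows "(b, x) \<in> hexablock"
proof -
  have x: "x \<in> tetrablock" "cmod a * Sfun x < 1" using assms by (auto simp: hexablock_iff)
  have "cmod b * Sfun x \<le> cmod a * Sfun x" using assms(2) Sfun_ge1[OF x(1)]
    by (intro mult_right_mono) auto
  then show ?thesis using x by (simp add: hexablock_iff)
qed

lemma H_sc: assumes "(a, x) \<in> hexablock" "cmod t \<le> 1" shows "(a, sc t x) \<in> hexablock"
proof -
  have x: "x \<in> tetrablock" "cmod a * Sfun x < 1" using assms by (auto simp: hexablock_iff)
  have "cmod a * Sfun (sc t x) \<le> cmod a * Sfun x" using sc_S[OF x(1) assms(2)]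
    by (intro mult_left_mono) auto
  then show ?thesis using x sc_E[OF x(1) assms(2)] by (simp add: hexablock_iff)
qed

lemma H_0: "x \<in> tetrablock \<Longrightarrow> (0, x) \<in> hexablock" by (simp add: hexablock_iff)

lemma H_origin: "cmod a < 1 \<Longrightarrow> (a, (0,0,0)) \<in> hexablock" by (simp add: hexablock_iff E0 S0)

lemma curve_deriv:
  assumes "(f0 has_field_derivative d0) (at t)" "(f1 has_field_derivative d1) (at t)"
    "(f2 has_field_derivative d2) (at t)" "(f3 has_field_derivative d3) (at t)"
  shows "((\<lambda>t. (f0 t, f1 t, f2 t, f3 t)) has_derivative (\<lambda>h. cscale4 h (d0, d1, d2, d3))) (at t)"
proof -
  have "((\<lambda>t. (f0 t, f1 t, f2 t, f3 t)) has_derivative (\<lambda>h. ((*) d0 h, (*) d1 h, (*) d2 h, (*) d3 h))) (at t)"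
    by (intro has_derivative_Pair has_field_derivative_imp_has_derivative assms)
  moreover have "(\<lambda>h. ((*) d0 h, (*) d1 h, (*) d2 h, (*) d3 h)) = (\<lambda>h. cscale4 h (d0, d1, d2, d3))"
    by (rule ext) (simp add: cscale4_def mult.commute)
  ultimately show ?thesis by simp
qed

lemma hol_curve:
  assumes hol: "holomorphic4 F1 hexablock"
    and g: "(\<gamma> has_derivative (\<lambda>h. cscale4 h V)) (at t)" and t: "\<gamma> t \<in> hexablock"
  shows "\<exists>D. ((\<lambda>t. F1 (\<gamma> t)) has_field_derivative D) (at t)"
proof -
  obtain L where L: "(F1 has_derivative L) (at (\<gamma> t))" and lin: "\<forall>c v. L (cscale4 c v) = c * L v"
    using hol t unfolding holomorphic4_def by blast
  have "((F1 \<circ> \<gamma>) has_derivative (L \<circ> (\<lambda>h. cscale4 h V))) (at t)"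
    by (rule diff_chain_at[OF g L])
  moreover have "L \<circ> (\<lambda>h. cscale4 h V) = (*) (L V)"
    by (rule ext) (simp add: lin mult.commute)
  ultimately have "((\<lambda>t. F1 (\<gamma> t)) has_field_derivative (L V)) (at t)"
    by (simp add: has_field_derivative_def comp_def)
  then show ?thesis by blast
qed

lemma hol_t:
  assumes hol: "holomorphic4 F1 hexablock"
  shows "(\<lambda>t. F1 (a, sc t x)) holomorphic_on {t. (a, sc t x) \<in> hexablock}"
  unfolding holomorphic_on_def field_differentiable_def
proof (intro ballI)
  fix t assume t: "t \<in> {t. (a, sc t x) \<in> hexablock}"
  have d: "((\<lambda>t. (a, t * fst x, t * fst (snd x), t\<^sup>2 * snd (snd x))) has_derivative
      (\<lambda>h. cscale4 h (0, fst x, fst (snd x), 2 * t * snd (snd x)))) (at t)"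
    by (intro curve_deriv) (auto intro!: derivative_eq_intros)
  have "\<exists>D. ((\<lambda>t. F1 (a, sc t x)) has_field_derivative D) (at t)"
    using hol_curve[OF hol d] t by (simp add: sc_def)
  then show "\<exists>D. ((\<lambda>t. F1 (a, sc t x)) has_field_derivative D) (at t within {t. (a, sc t x) \<in> hexablock})"
    using has_field_derivative_at_within by blast
qed

lemma hol_a:
  assumes hol: "holomorphic4 F1 hexablock"
  shows "(\<lambda>b. F1 (b, x)) holomorphic_on {b. (b, x) \<in> hexablock}"
  unfolding holomorphic_on_def field_differentiable_def
proof (intro ballI)
  fix b assume b: "b \<in> {b. (b, x) \<in> hexablock}"
  obtain x1 x2 x3 where x: "x = (x1, x2, x3)" by (cases x)
  have d: "((\<lambda>b. (b, x1, x2, x3)) has_derivative (\<lambda>h. cscale4 h (1, 0, 0, 0))) (at b)"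
    by (intro curve_deriv) (auto intro!: derivative_eq_intros)
  have "\<exists>D. ((\<lambda>b. F1 (b, x)) has_field_derivative D) (at b)"
    using hol_curve[OF hol d] b by (simp add: x)
  then show "\<exists>D. ((\<lambda>b. F1 (b, x)) has_field_derivative D) (at b within {b. (b, x) \<in> hexablock})"
    using has_field_derivative_at_within by blast
qed

lemma F_cont:
  assumes hol: "holomorphic4 F1 hexablock" and p: "p \<in> hexablock"
  shows "isCont F1 p"
proof -
  obtain L where "(F1 has_derivative L) (at p)" using hol p unfolding holomorphic4_def by blast
  then show ?thesis by (rule has_derivative_continuous)
qed

lemma Lmax:
  fixes f :: "complex \<Rightarrow> complex"
  assumes hol: "f holomorphic_on \<Omega>" and op: "open \<Omega>"
    and bd: "\<And>\<epsilon>. \<epsilon> > 0 \<Longrightarrow> \<exists>K. compact K \<and> K \<subseteq> \<Omega> \<and> (\<forall>t\<in>\<Omega> - K. cmod (f t) \<le> M + \<epsilon>)"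
    and t0: "t0 \<in> \<Omega>"
  shows "cmod (f t0) \<le> M"
proof (rule ccontr)
  assume "\<not> cmod (f t0) \<le> M"
  define \<epsilon> where "\<epsilon> = (cmod (f t0) - M) / 2"
  have \<epsilon>: "\<epsilon> > 0" using \<open>\<not> cmod (f t0) \<le> M\<close> unfolding \<epsilon>_def by simp
  obtain K where K: "compact K" "K \<subseteq> \<Omega>" "\<forall>t\<in>\<Omega> - K. cmod (f t) \<le> M + \<epsilon>"
    using bd[OF \<epsilon>] by blast
  define U where "U = \<Omega> \<inter> (\<lambda>t. cmod (f t)) -` {M + \<epsilon><..}"
  have contf: "continuous_on \<Omega> f" by (rule holomorphic_on_imp_continuous_on[OF hol])
  have contn: "continuous_on \<Omega> (\<lambda>t. cmod (f t))" by (intro continuous_intros contf)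
  have openU: "open U" unfolding U_def
    by (rule continuous_open_preimage[OF contn op open_greaterThan])
  have UK: "U \<subseteq> K" using K(3) unfolding U_def by force
  have UO: "U \<subseteq> \<Omega>" unfolding U_def by blast
  have clU: "closure U \<subseteq> K" by (rule closure_minimal[OF UK compact_imp_closed[OF K(1)]])
  have t0U: "t0 \<in> U" unfolding U_def using t0 \<epsilon>_def \<epsilon> by simp
  have "cmod (f t0) \<le> M + \<epsilon>"
  proof (rule maximum_modulus_frontier[of f U])
    show "f holomorphic_on interior U" unfolding interior_open[OF openU]
      by (rule holomorphic_on_subset[OF hol UO])
    show "continuous_on (closure U) f"
      by (rule continuous_on_subset[OF contf]) (use clU K(2) in blast)
    show "bounded U" by (rule bounded_subset[OF compact_imp_bounded[OF K(1)] UK])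
    show "t0 \<in> U" by (rule t0U)
  next
    fix w assume w: "w \<in> frontier U"
    then have "w \<in> closure U" "w \<notin> U" unfolding frontier_def interior_open[OF openU] by auto
    then have "w \<in> \<Omega>" "w \<notin> U" using clU K(2) by auto
    then show "cmod (f w) \<le> M + \<epsilon>" unfolding U_def by auto
  qed
  then have "2 * cmod (f t0) \<le> 2 * M + (cmod (f t0) - M)" unfolding \<epsilon>_def by (simp add: field_simps)
  then show False using \<open>\<not> cmod (f t0) \<le> M\<close> by simp
qed

lemma balanced_connected:
  fixes S :: "complex set"
  assumes "0 \<in> S" "\<And>t u. t \<in> S \<Longrightarrow> cmod u \<le> 1 \<Longrightarrow> u * t \<in> S"
  shows "connected S"
proof (rule starlike_imp_connected)
  show "starlike S" unfolding starlike_def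
  proof (intro bexI[of _ 0] ballI subsetI)
    fix x y assume x: "x \<in> S" and y: "y \<in> closed_segment 0 x"
    then obtain u :: real where u: "0 \<le> u" "u \<le> 1" "y = (1 - u) *\<^sub>R 0 + u *\<^sub>R x"
      unfolding closed_segment_def by blast
    have y': "y = complex_of_real u * x" using u(3) by (simp add: scaleR_conv_of_real)
    have "cmod (complex_of_real u) \<le> 1" using u by simp
    then show "y \<in> S" unfolding y' by (rule assms(2)[OF x])
  qed (use assms(1) in simp)
qed

lemma cont_sc: "continuous (at t) (\<lambda>t. (a::complex, sc t x))"
  unfolding sc_def by (intro continuous_intros)

lemma cont_on_sc: "continuous_on S (\<lambda>t. (a::complex, sc t x))"
  unfolding sc_def by (intro continuous_intros)

lemma slice_open: "open {t. (a, sc t x) \<in> hexablock}"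
proof -
  have "open ((\<lambda>t. (a, sc t x)) -` hexablock)"
    by (rule continuous_open_vimage[OF H_open cont_sc])
  then show ?thesis by (simp add: vimage_def)
qed

lemma slice_conn:
  assumes "cmod a < 1"
  shows "connected {t. (a, sc t x) \<in> hexablock}"
proof (rule balanced_connected)
  show "0 \<in> {t. (a, sc t x) \<in> hexablock}" using H_origin[OF assms] by (simp add: sc_0)
  fix t u assume t: "t \<in> {t. (a, sc t x) \<in> hexablock}" and u: "cmod u \<le> 1"
  have "(a, sc u (sc t x)) \<in> hexablock" using H_sc[OF _ u] t by simp
  then show "u * t \<in> {t. (a, sc t x) \<in> hexablock}" by (simp add: sc_sc)
qed

lemma cont_S_sc:
  assumes "x \<in> tetrablock"
  shows "continuous_on (cball 0 1) (\<lambda>t. Sfun (sc t x))"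
proof (rule continuous_on_compose2[OF Sfun_cont])
  show "continuous_on (cball 0 1) (\<lambda>t. sc t x)" unfolding sc_def by (intro continuous_intros)
  show "(\<lambda>t. sc t x) ` cball 0 1 \<subseteq> tetrablock" using sc_E[OF assms] by auto
qed

lemma compact_Tc:
  assumes "x \<in> tetrablock"
  shows "compact {t \<in> cball 0 1. Sfun (sc t x) \<le> c}"
proof -
  have "closed {t \<in> cball 0 1. Sfun (sc t x) \<le> c}"
    by (rule continuous_on_closed_Collect_le[OF cont_S_sc[OF assms] continuous_on_const closed_cball])
  moreover have "bounded {t \<in> cball (0::complex) 1. Sfun (sc t x) \<le> c}"
    by (rule bounded_subset[OF bounded_cball[of 0 1]]) auto
  ultimately show ?thesis using compact_eq_bounded_closed by blast
qed

lemma proper_into: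
  assumes "proper_map (\<lambda>(a, x). (F1 (a, x), x)) hexablock hexablock" "(a, x) \<in> hexablock"
  shows "(F1 (a, x), x) \<in> hexablock"
  using assms unfolding proper_map_def by auto

lemma proper_cpt:
  assumes "proper_map (\<lambda>(a, x). (F1 (a, x), x)) hexablock hexablock" "compact K" "K \<subseteq> hexablock"
  shows "compact {p \<in> hexablock. (F1 p, snd p) \<in> K}"
proof -
  have "compact {p \<in> hexablock. (\<lambda>(a, x). (F1 (a, x), x)) p \<in> K}"
    using assms unfolding proper_map_def by blast
  moreover have "{p \<in> hexablock. (\<lambda>(a, x). (F1 (a, x), x)) p \<in> K} = {p \<in> hexablock. (F1 p, snd p) \<in> K}"
    by (auto simp: case_prod_beta)
  ultimately show ?thesis by simp
qed

lemma pull_closed: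
  fixes P :: "c4 set" and a :: complex
  assumes "compact P"
  shows "closed {t. (a, sc t x) \<in> P}"
proof -
  have "closed ((\<lambda>t. (a, sc t x)) -` P)"
    by (rule continuous_closed_vimage[OF compact_imp_closed[OF assms] cont_sc])
  then show ?thesis by (simp add: vimage_def)
qed

lemma real_est1:
  fixes y b s :: real
  assumes "0 \<le> y" "y * s < 1" "s > 1 / b" "b > 0"
  shows "y < b"
proof (rule ccontr)
  assume "\<not> y < b"
  then have "b \<le> y" by simp
  have "0 < 1/b" using assms(4) by simp
  then have s0: "0 < s" using assms(3) by linarith
  have "1 < b * s" using assms(3,4) by (simp add: field_simps)
  also have "\<dots> \<le> y * s" using \<open>b \<le> y\<close> assms(3,4)
    using s0 by (intro mult_right_mono) auto
  finally show False using assms(2) by simp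
qed

lemma real_est2:
  fixes a \<eta> \<epsilon> y :: real
  assumes "a > 0" "0 < \<eta>" "\<eta> \<le> a/2" "\<eta> \<le> \<epsilon> * a\<^sup>2 / 2" "y > a - \<eta>"
  shows "1 / y \<le> 1 / a + \<epsilon>"
proof -
  have p: "a - \<eta> > 0" "a - \<eta> \<ge> a/2" using assms by auto
  have "1 / y \<le> 1 / (a - \<eta>)" using assms(5) p by (intro divide_left_mono) auto
  also have "1 / (a - \<eta>) = 1 / a + \<eta> / (a * (a - \<eta>))" using p assms(1) by (simp add: field_simps)
  also have "\<eta> / (a * (a - \<eta>)) \<le> \<eta> / (a * (a/2))"
    using p assms by (intro divide_left_mono mult_left_mono mult_pos_pos) auto
  also have "\<eta> / (a * (a/2)) = 2 * \<eta> / a\<^sup>2" by (simp add: power2_eq_square)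
  also have "\<dots> \<le> \<epsilon>" using assms(1,4) by (simp add: field_simps)
  finally show ?thesis by simp
qed

lemma core:
  fixes F1 :: "c4 \<Rightarrow> complex"
  assumes hol: "holomorphic4 F1 hexablock"
    and prp: "proper_map (\<lambda>(a, x). (F1 (a, x), x)) hexablock hexablock"
    and x0E: "x0 \<in> tetrablock" and nz: "fst x0 \<noteq> 0"
  shows "\<exists>\<kappa>. 0 < \<kappa> \<and> \<kappa> < 1 \<and> (\<forall>a0 t. \<kappa> < cmod a0 \<longrightarrow> (a0, sc t x0) \<in> hexablock \<longrightarrow>
           F1 (a0, sc t x0) = F1 (a0, (0,0,0)) \<and> cmod (F1 (a0, (0,0,0))) = cmod a0)"
proof -
  define K0 where "K0 = (\<lambda>t. (0::complex, sc t x0)) ` cball 0 1"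
  have K0c: "compact K0" unfolding K0_def
    by (rule compact_continuous_image[OF cont_on_sc compact_cball])
  have K0H: "K0 \<subseteq> hexablock"
  proof
    fix p assume "p \<in> K0"
    then obtain t where t: "cmod t \<le> 1" "p = (0, sc t x0)" unfolding K0_def by auto
    show "p \<in> hexablock" unfolding t(2) by (rule H_0[OF sc_E[OF x0E t(1)]])
  qed
  define P0 where "P0 = {p \<in> hexablock. (F1 p, snd p) \<in> K0}"
  have P0c: "compact P0" unfolding P0_def by (rule proper_cpt[OF prp K0c K0H])
  have "\<exists>m<1. \<forall>p\<in>P0. cmod (fst p) \<le> m"
  proof (cases "P0 = {}")
    case True then show ?thesis by (intro exI[of _ 0]) auto
  next
    case False
    have "continuous_on P0 (\<lambda>p. cmod (fst p))" by (intro continuous_intros)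
    then obtain q where q: "q \<in> P0" "\<forall>p\<in>P0. cmod (fst p) \<le> cmod (fst q)"
      using continuous_attains_sup[OF P0c False] by blast
    have "q \<in> hexablock" using q(1) unfolding P0_def by simp
    then have "cmod (fst q) < 1" using H_a[of "fst q" "snd q"] by simp
    then show ?thesis using q(2) by blast
  qed
  then obtain m where m: "m < 1" "\<forall>p\<in>P0. cmod (fst p) \<le> m" by blast
  have S1: "1 < Sfun x0" by (rule S_gt1[OF x0E nz])
  define \<kappa> where "\<kappa> = max (max m (1 / Sfun x0)) (1/2)"
  have \<kappa>: "0 < \<kappa>" "\<kappa> < 1" "m \<le> \<kappa>" "1 / Sfun x0 \<le> \<kappa>" unfolding \<kappa>_def using m(1) S1 by auto
  have main: "F1 (a0, sc t0 x0) = F1 (a0, (0,0,0)) \<and> cmod (F1 (a0, (0,0,0))) = cmod a0"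
    if a0: "\<kappa> < cmod a0" and t0: "(a0, sc t0 x0) \<in> hexablock" for a0 t0
  proof -
    define \<Omega> where "\<Omega> = {t. (a0, sc t x0) \<in> hexablock}"
    define \<phi> where "\<phi> = (\<lambda>t. F1 (a0, sc t x0))"
    have a1: "cmod a0 < 1" using H_a[OF t0] .
    have a0p: "0 < cmod a0" using a0 \<kappa>(1) by linarith
    have opO: "open \<Omega>" unfolding \<Omega>_def by (rule slice_open)
    have coO: "connected \<Omega>" unfolding \<Omega>_def by (rule slice_conn[OF a1])
    have O0: "0 \<in> \<Omega>" unfolding \<Omega>_def using H_origin[OF a1] by (simp add: sc_0)
    have t0O: "t0 \<in> \<Omega>" unfolding \<Omega>_def using t0 by simp
    have holO: "\<phi> holomorphic_on \<Omega>" unfolding \<phi>_def \<Omega>_def by (rule hol_t[OF hol])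
    have Oball: "cmod t < 1" if t: "t \<in> \<Omega>" for t
    proof (rule ccontr)
      assume "\<not> cmod t < 1"
      then have ge: "1 \<le> cmod t" by simp
      then have tnz: "t \<noteq> 0" by auto
      have tH: "(a0, sc t x0) \<in> hexablock" using t unfolding \<Omega>_def by simp
      have tE: "sc t x0 \<in> tetrablock" using H_E[OF tH] .
      have n1: "cmod (1 / t) \<le> 1" using ge by (simp add: norm_divide divide_le_eq_1)
      have "sc (1/t) (sc t x0) = x0" using tnz by (simp add: sc_sc sc_1)
      then have "Sfun x0 \<le> Sfun (sc t x0)" using sc_S[OF tE n1] by simp
      moreover have "cmod a0 * Sfun (sc t x0) < 1" using tH by (simp add: hexablock_iff)
      ultimately have "cmod a0 * Sfun x0 < 1"
        using a0p by (meson le_less_trans mult_left_mono less_imp_le)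
      then have "cmod a0 < 1 / Sfun x0" using S1 by (simp add: field_simps)
      then show False using \<kappa>(4) a0 by linarith
    qed
    have tE: "sc t x0 \<in> tetrablock" if "t \<in> \<Omega>" for t
      using that unfolding \<Omega>_def by (auto intro: H_E)
    have nozero: "\<phi> t \<noteq> 0" if t: "t \<in> \<Omega>" for t
    proof
      assume z: "\<phi> t = 0"
      have "(0::complex, sc t x0) \<in> K0" unfolding K0_def using Oball[OF t] by force
      then have "(a0, sc t x0) \<in> P0" using t z unfolding P0_def \<Omega>_def \<phi>_def by simp
      then have "cmod a0 \<le> m" using m(2) by force
      then show False using a0 \<kappa>(3) by linarith
    qed
    have into: "cmod (\<phi> t) * Sfun (sc t x0) < 1" if t: "t \<in> \<Omega>" for t
    proof -
      have "(F1 (a0, sc t x0), sc t x0) \<in> hexablock"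
        by (rule proper_into[OF prp]) (use t in \<open>simp add: \<Omega>_def\<close>)
      then show ?thesis unfolding \<phi>_def by (simp add: hexablock_iff)
    qed
    have upper: "cmod (\<phi> t) \<le> cmod a0" if t: "t \<in> \<Omega>" for t
    proof (rule Lmax[OF holO opO _ t])
      fix \<epsilon> :: real assume \<epsilon>: "\<epsilon> > 0"
      define K where "K = {t \<in> cball 0 1. Sfun (sc t x0) \<le> 1 / (cmod a0 + \<epsilon>)}"
      have Kc: "compact K" unfolding K_def by (rule compact_Tc[OF x0E])
      have KO: "K \<subseteq> \<Omega>"
      proof
        fix t assume t: "t \<in> K"
        then have tc: "cmod t \<le> 1" and tS: "Sfun (sc t x0) \<le> 1 / (cmod a0 + \<epsilon>)" unfolding K_def by auto
        have "cmod a0 * Sfun (sc t x0) \<le> cmod a0 * (1 / (cmod a0 + \<epsilon>))"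
          using tS by (intro mult_left_mono) auto
        also have "\<dots> < 1"
        proof -
          have pos: "0 < cmod a0 + \<epsilon>" using \<epsilon> a0p by argo
          have "cmod a0 / (cmod a0 + \<epsilon>) < 1" using pos \<epsilon> by (simp add: divide_less_eq)
          then show ?thesis by simp
        qed
        finally show "t \<in> \<Omega>" unfolding \<Omega>_def using sc_E[OF x0E tc] by (simp add: hexablock_iff)
      qed
      have "\<forall>t\<in>\<Omega> - K. cmod (\<phi> t) \<le> cmod a0 + \<epsilon>"
      proof
        fix t assume t: "t \<in> \<Omega> - K"
        then have "Sfun (sc t x0) > 1 / (cmod a0 + \<epsilon>)" using Oball[of t] unfolding K_def by auto
        moreover have tO: "t \<in> \<Omega>" using t by simp
        moreover have pos: "0 < cmod a0 + \<epsilon>" using \<epsilon> a0p by argo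
        ultimately have "cmod (\<phi> t) < cmod a0 + \<epsilon>"
          using real_est1[OF norm_ge_zero into[OF tO]] by blast
        then show "cmod (\<phi> t) \<le> cmod a0 + \<epsilon>" by simp
      qed
      then show "\<exists>K. compact K \<and> K \<subseteq> \<Omega> \<and> (\<forall>t\<in>\<Omega> - K. cmod (\<phi> t) \<le> cmod a0 + \<epsilon>)"
        using Kc KO by blast
    qed
    have holI: "(\<lambda>t. 1 / \<phi> t) holomorphic_on \<Omega>"
      by (rule holomorphic_on_divide[OF holomorphic_on_const holO nozero])
    have lower: "cmod (1 / \<phi> t) \<le> 1 / cmod a0" if t: "t \<in> \<Omega>" for t
    proof (rule Lmax[OF holI opO _ t])
      fix \<epsilon> :: real assume \<epsilon>: "\<epsilon> > 0"
      define \<eta> where "\<eta> = min (cmod a0 / 2) (\<epsilon> * (cmod a0)\<^sup>2 / 2)"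
      have \<eta>: "0 < \<eta>" "\<eta> \<le> cmod a0 / 2" "\<eta> \<le> \<epsilon> * (cmod a0)\<^sup>2 / 2"
        unfolding \<eta>_def using \<epsilon> a0p by auto
      define Tc where "Tc = {t \<in> cball 0 1. Sfun (sc t x0) \<le> 1 / cmod a0}"
      have Tcc: "compact Tc" unfolding Tc_def by (rule compact_Tc[OF x0E])
      define Kl where "Kl = (\<lambda>bt. (fst bt, sc (snd bt) x0)) ` (cball (0::complex) (cmod a0 - \<eta>) \<times> Tc)"
      have Klc: "compact Kl" unfolding Kl_def
      proof (rule compact_continuous_image)
        show "continuous_on (cball 0 (cmod a0 - \<eta>) \<times> Tc) (\<lambda>bt. (fst bt, sc (snd bt) x0))"
          unfolding sc_def by (intro continuous_intros)
        show "compact (cball (0::complex) (cmod a0 - \<eta>) \<times> Tc)" by (intro compact_Times compact_cball Tcc)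
      qed
      have KlH: "Kl \<subseteq> hexablock"
      proof
        fix p assume "p \<in> Kl"
        then obtain b t where bt: "p = (b, sc t x0)" "cmod b \<le> cmod a0 - \<eta>" "t \<in> Tc"
          unfolding Kl_def by force
        have tc: "cmod t \<le> 1" and tS: "Sfun (sc t x0) \<le> 1 / cmod a0" using bt(3) unfolding Tc_def by auto
        have Sp: "0 \<le> Sfun (sc t x0)" using Sfun_ge1[OF sc_E[OF x0E tc]] by simp
        have "cmod b * Sfun (sc t x0) \<le> (cmod a0 - \<eta>) * (1 / cmod a0)"
          using bt(2) tS Sp \<eta> by (intro mult_mono) auto
        also have "\<dots> < 1" using \<eta> a0p by (simp add: field_simps)
        finally show "p \<in> hexablock" unfolding bt(1) using sc_E[OF x0E tc] by (simp add: hexablock_iff)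
      qed
      define P where "P = {p \<in> hexablock. (F1 p, snd p) \<in> Kl}"
      have Pc: "compact P" unfolding P_def by (rule proper_cpt[OF prp Klc KlH])
      define B where "B = {t. (a0, sc t x0) \<in> P}"
      have Bcl: "closed B" unfolding B_def by (rule pull_closed[OF Pc])
      have BO: "B \<subseteq> \<Omega>" unfolding B_def P_def \<Omega>_def by auto
      have Bb: "bounded B"
        by (rule bounded_subset[OF bounded_cball[of 0 1]]) (use BO Oball in force)
      have Bc: "compact B" using Bcl Bb compact_eq_bounded_closed by blast
      have "\<forall>t\<in>\<Omega> - B. cmod (1 / \<phi> t) \<le> 1 / cmod a0 + \<epsilon>"
      proof
        fix t assume t: "t \<in> \<Omega> - B"
        have big: "cmod (\<phi> t) > cmod a0 - \<eta>"
        proof (rule ccontr)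
          assume "\<not> cmod (\<phi> t) > cmod a0 - \<eta>"
          then have sm: "cmod (\<phi> t) \<le> cmod a0 - \<eta>" by simp
          have tO: "t \<in> \<Omega>" using t by simp
          have tc: "cmod t \<le> 1" using Oball[OF tO] by simp
          have "cmod a0 * Sfun (sc t x0) < 1" using tO unfolding \<Omega>_def by (simp add: hexablock_iff)
          then have "Sfun (sc t x0) \<le> 1 / cmod a0" using a0p by (simp add: field_simps)
          then have "t \<in> Tc" unfolding Tc_def using tc by simp
          then have "(\<phi> t, sc t x0) \<in> Kl" unfolding Kl_def using sm
            by (intro image_eqI[of _ _ "(\<phi> t, t)"]) auto
          then have "(a0, sc t x0) \<in> P" unfolding P_def \<phi>_def using tO unfolding \<Omega>_def by simp
          then have "t \<in> B" unfolding B_def by simp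
          then show False using t by simp
        qed
        have "1 / cmod (\<phi> t) \<le> 1 / cmod a0 + \<epsilon>"
          by (rule real_est2[OF a0p \<eta> big])
        then show "cmod (1 / \<phi> t) \<le> 1 / cmod a0 + \<epsilon>" by (simp add: norm_divide)
      qed
      then show "\<exists>K. compact K \<and> K \<subseteq> \<Omega> \<and> (\<forall>t\<in>\<Omega> - K. cmod (1 / \<phi> t) \<le> 1 / cmod a0 + \<epsilon>)"
        using Bc BO by blast
    qed
    have eqmod: "cmod (\<phi> t) = cmod a0" if t: "t \<in> \<Omega>" for t
    proof -
      have "1 / cmod (\<phi> t) \<le> 1 / cmod a0" using lower[OF t] by (simp add: norm_divide)
      then have "cmod a0 \<le> cmod (\<phi> t)" using nozero[OF t] a0p by (simp add: field_simps)
      then show ?thesis using upper[OF t] by simp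
    qed
    have "\<phi> constant_on \<Omega>"
    proof (rule maximum_modulus_principle[OF holO opO coO opO order_refl O0])
      fix z assume "z \<in> \<Omega>"
      then show "cmod (\<phi> z) \<le> cmod (\<phi> 0)" using eqmod O0 by simp
    qed
    then obtain c where c: "\<And>t. t \<in> \<Omega> \<Longrightarrow> \<phi> t = c" unfolding constant_on_def by blast
    have "\<phi> t0 = \<phi> 0" using c[OF t0O] c[OF O0] by simp
    moreover have "cmod (\<phi> 0) = cmod a0" using eqmod[OF O0] .
    ultimately show ?thesis unfolding \<phi>_def by (simp add: sc_0)
  qed
  show ?thesis using \<kappa>(1,2) main by blast
qed

lemma fiber_ball:
  assumes "y \<in> tetrablock"
  shows "{b. (b, y) \<in> hexablock} = ball 0 (1 / Sfun y)"
proof -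
  have S: "0 < Sfun y" using Sfun_ge1[OF assms] by simp
  show ?thesis using assms S by (auto simp: hexablock_iff field_simps)
qed

lemma ball_annulus:
  fixes k \<rho> :: real and b :: complex
  assumes "0 < k" "k < \<rho>" "b \<in> ball (of_real ((k + \<rho>)/2)) ((\<rho> - k)/2)"
  shows "k < cmod b" "cmod b < \<rho>"
proof -
  have d: "cmod (b - of_real ((k + \<rho>)/2)) < (\<rho> - k)/2" using assms(3) by (simp add: dist_norm norm_minus_commute)
  have n: "cmod (complex_of_real ((k + \<rho>)/2)) = (k + \<rho>)/2" using assms(1,2) unfolding norm_of_real by simp
  have t1: "cmod (complex_of_real ((k + \<rho>)/2)) - cmod b \<le> cmod (b - of_real ((k + \<rho>)/2))"
    using norm_triangle_ineq3[of "complex_of_real ((k + \<rho>)/2)" b] by (simp add: norm_minus_commute)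
  have t2: "cmod b - cmod (complex_of_real ((k + \<rho>)/2)) \<le> cmod (b - of_real ((k + \<rho>)/2))"
    by (rule norm_triangle_ineq2)
  show "k < cmod b" using d n t1 by argo
  show "cmod b < \<rho>" using d n t2 by argo
qed

theorem main_aux:
  fixes F1 :: "c4 \<Rightarrow> complex"
  assumes hol: "holomorphic4 F1 hexablock"
    and prp: "proper_map (\<lambda>(a, x). (F1 (a, x), x)) hexablock hexablock"
  shows "\<exists>c. cmod c = 1 \<and> (\<forall>a x. (a, x) \<in> hexablock \<longrightarrow> F1 (a, x) = c * a)"
proof -
  define xs :: c3 where "xs = (1/2, 0, 0)"
  have xsE: "xs \<in> tetrablock" unfolding tetrablock_def
  proof (intro CollectI allI impI)
    fix z w :: complex assume z: "cmod z \<le> 1" "cmod w \<le> 1"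
    show "Dx xs z w \<noteq> 0"
    proof
      assume "Dx xs z w = 0"
      then have "z = 2" unfolding Dx_def xs_def by (simp add: field_simps)
      then show False using z by simp
    qed
  qed
  have xsnz: "fst xs \<noteq> 0" unfolding xs_def by simp
  obtain \<kappa>1 where k1: "0 < \<kappa>1" "\<kappa>1 < 1"
    and cr1: "\<forall>a0 t. \<kappa>1 < cmod a0 \<longrightarrow> (a0, sc t xs) \<in> hexablock \<longrightarrow>
           F1 (a0, sc t xs) = F1 (a0, (0,0,0)) \<and> cmod (F1 (a0, (0,0,0))) = cmod a0"
    using core[OF hol prp xsE xsnz] by blast
  have f0mod: "cmod (F1 (a, (0,0,0))) = cmod a" if "\<kappa>1 < cmod a" "cmod a < 1" for a
  proof -
    have h: "(a, sc 0 xs) \<in> hexablock" using H_origin[OF that(2)] by (simp add: sc_0)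
    show ?thesis using cr1[rule_format, OF that(1) h] by simp
  qed
  have ball1: "{b. (b, (0,0,0)) \<in> hexablock} = ball 0 1"
    using fiber_ball[OF E0] by (simp add: S0)
  have holf0: "(\<lambda>b. F1 (b, (0,0,0))) holomorphic_on ball 0 1"
    using hol_a[OF hol, of "(0,0,0)"] ball1 by simp
  define a1 :: complex where "a1 = of_real ((\<kappa>1 + 1)/2)"
  define B where "B = ball a1 ((1 - \<kappa>1)/2)"
  have Bann: "\<kappa>1 < cmod b \<and> cmod b < 1" if "b \<in> B" for b
    using ball_annulus[OF k1(1) k1(2), of b] that unfolding B_def a1_def by simp
  have B1: "B \<subseteq> ball 0 1" using Bann by auto
  have a1B: "a1 \<in> B" unfolding B_def using k1 by simp
  define g where "g = (\<lambda>b. F1 (b, (0,0,0)) / b)"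
  have holg: "g holomorphic_on B" unfolding g_def
  proof (rule holomorphic_on_divide)
    show "(\<lambda>b. F1 (b, (0,0,0))) holomorphic_on B" by (rule holomorphic_on_subset[OF holf0 B1])
    show "(\<lambda>b. b) holomorphic_on B" by (intro holomorphic_intros)
    fix z assume "z \<in> B"
    then show "z \<noteq> 0" using Bann k1 by force
  qed
  have gmod: "cmod (g b) = 1" if "b \<in> B" for b
  proof -
    have "b \<noteq> 0" using Bann[OF that] k1 by auto
    then show ?thesis unfolding g_def using f0mod Bann[OF that] by (simp add: norm_divide)
  qed
  have oB: "open B" and cB: "connected B" unfolding B_def by auto
  have "g constant_on B"
    by (rule maximum_modulus_principle[OF holg oB cB oB order_refl a1B])
       (simp add: gmod a1B)
  then obtain c where c: "\<And>b. b \<in> B \<Longrightarrow> g b = c" unfolding constant_on_def by blast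
  have c1: "cmod c = 1" using c[OF a1B] gmod[OF a1B] by simp
  have f0B: "F1 (b, (0,0,0)) = c * b" if "b \<in> B" for b
  proof -
    have "b \<noteq> 0" using Bann[OF that] k1 by auto
    then show ?thesis using c[OF that] unfolding g_def by (simp add: field_simps)
  qed
  have f0c: "F1 (a, (0,0,0)) = c * a" if "cmod a < 1" for a
  proof (rule analytic_continuation_open[of B "ball 0 1" "\<lambda>b. F1 (b, (0,0,0))" "\<lambda>b. c * b"])
    show "open B" "open (ball (0::complex) 1)" "B \<noteq> {}" "connected (ball (0::complex) 1)" "B \<subseteq> ball 0 1"
      using a1B B1 unfolding B_def by auto
    show "(\<lambda>b. F1 (b, (0,0,0))) holomorphic_on ball 0 1" by (rule holf0)
    show "(\<lambda>b. c * b) holomorphic_on ball 0 1" by (intro holomorphic_intros)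
    show "\<And>z. z \<in> B \<Longrightarrow> F1 (z, (0,0,0)) = c * z" by (rule f0B)
    show "a \<in> ball 0 1" using that by simp
  qed
  have good: "F1 (a, x) = c * a" if ax: "(a, x) \<in> hexablock" and nzx: "fst x \<noteq> 0" for a x
  proof -
    have xE: "x \<in> tetrablock" by (rule H_E[OF ax])
    have a1': "cmod a < 1" by (rule H_a[OF ax])
    obtain \<kappa> where k: "0 < \<kappa>" "\<kappa> < 1"
      and cr: "\<forall>a0 t. \<kappa> < cmod a0 \<longrightarrow> (a0, sc t x) \<in> hexablock \<longrightarrow>
           F1 (a0, sc t x) = F1 (a0, (0,0,0)) \<and> cmod (F1 (a0, (0,0,0))) = cmod a0"
      using core[OF hol prp xE nzx] by blast
    have A: "F1 (a0, sc t x) = c * a0" if "\<kappa> < cmod a0" "(a0, sc t x) \<in> hexablock" for a0 t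
      using cr that f0c[OF H_a[OF that(2)]] by auto
    have "\<exists>d>0. \<forall>t\<in>cball 0 1. dist t 0 < d \<longrightarrow> dist (Sfun (sc t x)) (Sfun (sc 0 x)) < 1/\<kappa> - 1"
    proof -
      have ep: "0 < 1/\<kappa> - 1" using k by (simp add: field_simps)
      have "\<forall>xa\<in>cball 0 1. \<forall>e>0. \<exists>d>0. \<forall>x'\<in>cball 0 1. dist x' xa < d \<longrightarrow> dist (Sfun (sc x' x)) (Sfun (sc xa x)) < e"
        using cont_S_sc[OF xE] unfolding continuous_on_iff .
      then have "\<forall>e>0. \<exists>d>0. \<forall>x'\<in>cball 0 1. dist x' 0 < d \<longrightarrow> dist (Sfun (sc x' x)) (Sfun (sc 0 x)) < e"
        by (rule bspec) simp
      then show ?thesis using ep by blast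
    qed
    then obtain d where d: "d > 0" "\<forall>t\<in>cball 0 1. dist t 0 < d \<longrightarrow> dist (Sfun (sc t x)) (Sfun (sc 0 x)) < 1/\<kappa> - 1"
      by blast
    define \<delta> where "\<delta> = min d 1"
    have \<delta>: "0 < \<delta>" "\<delta> \<le> 1" unfolding \<delta>_def using d(1) by auto
    have C: "F1 (b, sc t x) = c * b" if t: "cmod t < \<delta>" and b: "(b, sc t x) \<in> hexablock" for t b
    proof -
      have tc: "cmod t \<le> 1" using t \<delta> by simp
      have yE: "sc t x \<in> tetrablock" by (rule sc_E[OF xE tc])
      have "dist (Sfun (sc t x)) (Sfun (sc 0 x)) < 1/\<kappa> - 1" using d(2) t tc unfolding \<delta>_def by auto
      then have Slt: "Sfun (sc t x) < 1/\<kappa>" by (simp add: sc_0 S0 dist_real_def)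
      have Sge: "1 \<le> Sfun (sc t x)" by (rule Sfun_ge1[OF yE])
      define \<rho> where "\<rho> = 1 / Sfun (sc t x)"
      have k\<rho>: "\<kappa> < \<rho>" unfolding \<rho>_def using Slt Sge k(1) by (simp add: field_simps)
      have fb: "{b. (b, sc t x) \<in> hexablock} = ball 0 \<rho>" unfolding \<rho>_def by (rule fiber_ball[OF yE])
      define B2 where "B2 = ball (complex_of_real ((\<kappa> + \<rho>)/2)) ((\<rho> - \<kappa>)/2)"
      have B2ann: "\<kappa> < cmod b' \<and> cmod b' < \<rho>" if "b' \<in> B2" for b'
        using ball_annulus[OF k(1) k\<rho>, of b'] that unfolding B2_def by simp
      show ?thesis
      proof (rule analytic_continuation_open[of B2 "ball 0 \<rho>" "\<lambda>b. F1 (b, sc t x)" "\<lambda>b. c * b"])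
        show "open B2" "open (ball (0::complex) \<rho>)" "connected (ball (0::complex) \<rho>)"
          unfolding B2_def by auto
        show "B2 \<noteq> {}" unfolding B2_def using k\<rho> by auto
        show "B2 \<subseteq> ball 0 \<rho>" using B2ann by auto
        show "(\<lambda>b. F1 (b, sc t x)) holomorphic_on ball 0 \<rho>" using hol_a[OF hol, of "sc t x"] fb by simp
        show "(\<lambda>b. c * b) holomorphic_on ball 0 \<rho>" by (intro holomorphic_intros)
        show "F1 (z, sc t x) = c * z" if "z \<in> B2" for z
        proof (rule A)
          show "\<kappa> < cmod z" using B2ann[OF that] by simp
          have "z \<in> ball 0 \<rho>" using B2ann[OF that] by simp
          then show "(z, sc t x) \<in> hexablock" using fb by blast
        qed
        show "b \<in> ball 0 \<rho>" using b fb by blast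
      qed
    qed
    define \<Omega> where "\<Omega> = {t. (a, sc t x) \<in> hexablock}"
    have "F1 (a, sc 1 x) = c * a"
    proof (rule analytic_continuation_open[of "ball 0 \<delta>" \<Omega> "\<lambda>t. F1 (a, sc t x)" "\<lambda>t. c * a"])
      show "open (ball (0::complex) \<delta>)" by simp
      show "open \<Omega>" unfolding \<Omega>_def by (rule slice_open)
      show "ball 0 \<delta> \<noteq> {}" using \<delta> by simp
      show "connected \<Omega>" unfolding \<Omega>_def by (rule slice_conn[OF a1'])
      show "ball 0 \<delta> \<subseteq> \<Omega>" unfolding \<Omega>_def using H_sc[OF ax] \<delta> by auto
      show "(\<lambda>t. F1 (a, sc t x)) holomorphic_on \<Omega>" unfolding \<Omega>_def by (rule hol_t[OF hol])
      show "(\<lambda>t. c * a) holomorphic_on \<Omega>" by (intro holomorphic_intros)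
      show "F1 (a, sc z x) = c * a" if "z \<in> ball 0 \<delta>" for z
      proof (rule C)
        show "cmod z < \<delta>" using that by simp
        show "(a, sc z x) \<in> hexablock" using H_sc[OF ax, of z] that \<delta> by simp
      qed
      show "1 \<in> \<Omega>" unfolding \<Omega>_def using ax by (simp add: sc_1)
    qed
    then show ?thesis by (simp add: sc_1)
  qed
  have all: "F1 (a, x) = c * a" if ax: "(a, x) \<in> hexablock" for a x
  proof (cases "fst x = 0")
    case False then show ?thesis using good ax by blast
  next
    case True
    obtain x1 x2 x3 where xx: "x = (x1, x2, x3)" by (cases x)
    have x1: "x1 = 0" using True xx by simp
    define h where "h = (\<lambda>s. F1 (a, (s, x2, x3)) - c * a)"
    have isc: "isCont (\<lambda>s. (a, (s, x2, x3))) (0::complex)" by (intro continuous_intros)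
    have isF: "isCont F1 (a, (0, x2, x3))" using F_cont[OF hol] ax xx x1 by simp
    have "isCont h 0" unfolding h_def
      by (intro continuous_intros isCont_o2[OF isc] ) (use isF in simp)
    then have lim1: "(h \<longlongrightarrow> h 0) (at 0)" by (simp add: isCont_def)
    have W: "open {s. (a, (s, x2, x3)) \<in> hexablock}"
    proof -
      have "open ((\<lambda>s. (a, (s, x2, x3))) -` hexablock)"
        by (rule continuous_open_vimage[OF H_open]) (intro continuous_intros)
      then show ?thesis by (simp add: vimage_def)
    qed
    have W0: "0 \<in> {s. (a, (s, x2, x3)) \<in> hexablock}" using ax xx x1 by simp
    obtain e where e: "e > 0" "ball 0 e \<subseteq> {s. (a, (s, x2, x3)) \<in> hexablock}"
      using W W0 open_contains_ball by blast
    have "eventually (\<lambda>s. h s = 0) (at 0)"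
      unfolding eventually_at
    proof (intro exI[of _ e] conjI ballI impI)
      fix s :: complex assume s: "s \<in> UNIV" "s \<noteq> 0 \<and> dist s 0 < e"
      then have "(a, (s, x2, x3)) \<in> hexablock" using e(2) by (auto simp: dist_commute)
      then show "h s = 0" unfolding h_def using good[of a "(s, x2, x3)"] s by simp
    qed (rule e(1))
    then have lim2: "(h \<longlongrightarrow> 0) (at 0)" by (rule tendsto_eventually)
    have nb: "at (0::complex) \<noteq> bot" using trivial_limit_at[of "0::complex"] by simp
    have "h 0 = 0" by (rule tendsto_unique[OF nb lim1 lim2])
    then show ?thesis unfolding h_def using xx x1 by simp
  qed
  show ?thesis using c1 all by blast
qed

theorem mainTheorem8:
  fixes F1 :: "c4 \<Rightarrow> complex"
  assumes "holomorphic4 F1 hexablock"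
    and "proper_map (\<lambda>(a, x). (F1 (a, x), x)) hexablock hexablock"
  shows "\<exists>\<theta>::real. \<forall>a x. (a, x) \<in> hexablock \<longrightarrow> F1 (a, x) = exp (\<i> * of_real \<theta>) * a"
proof -
  obtain c where c: "cmod c = 1" "\<forall>a x. (a, x) \<in> hexablock \<longrightarrow> F1 (a, x) = c * a"
    using main_aux[OF assms] by blast
  have cnz: "c \<noteq> 0" using c(1) by auto
  have "exp (\<i> * of_real (Arg c)) = c"
    using cis_Arg[OF cnz] c(1) by (simp add: cis_conv_exp[symmetric] sgn_div_norm)
  then show ?thesis using c(2) by (intro exI[of _ "Arg c"]) simp
qed

end
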